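(* Let $\mathcal L$ be a finite relational language, let $E\notin\mathcal L$ be the binary predicate symbol of $T_{\mathrm{Graph}}$, let $\mathcal F$ be a family of models of $T_{\mathrm{Graph}}\cup T_{\mathcal L}$, and let $I\colon T_{\mathrm{Graph}}\leadsto\mathrm{Forb}_{T_{\mathrm{Graph}}\cup T_{\mathcal L}}(\mathcal F\!\uparrow^E)$ act identically on $E$. Then $$\chi(I)=\inf\{\chi(G): G\text{ a finite graph such that } I(M)\not\cong G \text{ for every model } M \text{ of } \mathrm{Forb}_{T_{\mathrm{Graph}}\cup T_{\mathcal L}}(\mathcal F\!\uparrow^E)\},$$ where $\chi(G)$ is the usual chromatic number and $\inf\varnothing=\infty$.
   Context: Structures are finite and canonical (no predicate holds on a tuple with a repeated entry); $R_P(M)$ is the set of (injective) tuples satisfying $P$. $T_{\mathcal L}$ is the theory whose models are all canonical $\mathcal L$-structures; $T_{\mathrm{Graph}}$ is the theory of simple graphs in the language $\{E\}$; $T_{\mathrm{Graph}}\cup T_{\mathcal L}$ is the theory over $\mathcal L\cup\{E\}$ combining both, whose models are graphs equipped with an arbitrary canonical $\mathcal L$-structure on the same vertex set. For a family $\mathcal F$ of such models, $\mathcal F\!\uparrow^E$ is the family of all models $F'$ of $T_{\mathrm{Graph}}\cup T_{\mathcal L}$ for which there is $F\in\mathcal F$ with $V(F')=V(F)$, $R_E(F')\supseteq R_E(F)$ and $R_P(F')=R_P(F)$ for all $P\in\mathcal L$. $\mathrm{Forb}_{T}(\mathcal G)$ is the theory whose models are the models of $T$ with no induced substructure isomorphic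 to a member of $\mathcal G$. $I$ acting identically on $E$ means $I(E)(x,y)=E(x,y)$, so $I(M)$ is the graph part of $M$. For an open interpretation $I\colon T_{\mathrm{Graph}}\leadsto T$, $\chi(I)=\sup(\{\ell\in\mathbb{N}_+:\forall n\ \exists N\in\mathcal M_n[T],\ T_{n,\ell}\subseteq I(N)\}\cup\{0\})+1$, where $\mathcal M_n[T]$ is the set of $n$-vertex models of $T$ up to isomorphism, $T_{n,\ell}$ is the complete $\ell$-partite graph on $n$ vertices with parts of sizes $\lfloor n/\ell\rfloor$ or $\lceil n/\ell\rceil$, and $G\subseteq H$ means an injection $V(G)\to V(H)$ mapping edges to edges. *)

theory Defs
  imports Main "HOL-Library.Extended_Nat"
begin

text \<open>Vertices are natural numbers
(every finite structure is isomorphic to one on natural numbers). The language L is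
a finite set Lang of predicate symbols of type 'p with arity function ar.\<close>

record 'p lstruct =
  verts :: "nat set"
  edges :: "(nat \<times> nat) set"
  rels  :: "'p \<Rightarrow> nat list set"

text \<open>Models of T_Graph \<union> T_L: nonempty finite vertex set, simple graph E,
canonical L-structure (only injective tuples of the right arity); symbols
outside L are interpreted as empty (normalisation).\<close>
definition is_model :: "'p set \<Rightarrow> ('p \<Rightarrow> nat) \<Rightarrow> 'p lstruct \<Rightarrow> bool" where
  "is_model Lang ar M \<longleftrightarrow>
     finite (verts M) \<and> verts M \<noteq> {} \<and>
     edges M \<subseteq> verts M \<times> verts M \<and> sym (edges M) \<and> irrefl (edges M) \<and>
     (\<forall>P\<in>Lang. rels M P \<subseteq> {xs. length xs = ar P \<and> distinct xs \<and> set xs \<subseteq> verts M}) \<and>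
     (\<forall>P. P \<notin> Lang \<longrightarrow> rels M P = {})"

definition struct_iso :: "'p set \<Rightarrow> 'p lstruct \<Rightarrow> 'p lstruct \<Rightarrow> bool" where
  "struct_iso Lang M N \<longleftrightarrow>
     (\<exists>f. bij_betw f (verts M) (verts N) \<and>
          (\<forall>x\<in>verts M. \<forall>y\<in>verts M. (x, y) \<in> edges M \<longleftrightarrow> (f x, f y) \<in> edges N) \<and>
          (\<forall>P\<in>Lang. \<forall>xs. set xs \<subseteq> verts M \<longrightarrow> (xs \<in> rels M P \<longleftrightarrow> map f xs \<in> rels N P)))"

definition induced :: "'p lstruct \<Rightarrow> nat set \<Rightarrow> 'p lstruct" where
  "induced M U = \<lparr>verts = U, edges = edges M \<inter> (U \<times> U),
                  rels = (\<lambda>P. {xs \<in> rels M P. set xs \<subseteq> U})\<rparr>"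

definition up_E :: "'p set \<Rightarrow> ('p \<Rightarrow> nat) \<Rightarrow> 'p lstruct set \<Rightarrow> 'p lstruct set" where
  "up_E Lang ar \<F> = {F'. is_model Lang ar F' \<and>
     (\<exists>F\<in>\<F>. verts F' = verts F \<and> edges F \<subseteq> edges F' \<and> (\<forall>P\<in>Lang. rels F' P = rels F P))}"

definition forb_model :: "'p set \<Rightarrow> ('p \<Rightarrow> nat) \<Rightarrow> 'p lstruct set \<Rightarrow> 'p lstruct \<Rightarrow> bool" where
  "forb_model Lang ar \<G> M \<longleftrightarrow> is_model Lang ar M \<and>
     \<not> (\<exists>U. U \<subseteq> verts M \<and> U \<noteq> {} \<and> (\<exists>G\<in>\<G>. struct_iso Lang (induced M U) G))"

type_synonym graph = "nat set \<times> (nat \<times> nat) set"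

definition fin_graph :: "graph \<Rightarrow> bool" where
  "fin_graph G \<longleftrightarrow> finite (fst G) \<and> fst G \<noteq> {} \<and> snd G \<subseteq> fst G \<times> fst G \<and>
     sym (snd G) \<and> irrefl (snd G)"

definition graph_iso :: "graph \<Rightarrow> graph \<Rightarrow> bool" where
  "graph_iso G H \<longleftrightarrow> (\<exists>f. bij_betw f (fst G) (fst H) \<and>
     (\<forall>x\<in>fst G. \<forall>y\<in>fst G. (x, y) \<in> snd G \<longleftrightarrow> (f x, f y) \<in> snd H))"

definition subgraph_emb :: "graph \<Rightarrow> graph \<Rightarrow> bool" where
  "subgraph_emb G H \<longleftrightarrow> (\<exists>f. inj_on f (fst G) \<and> f ` fst G \<subseteq> fst H \<and>
     (\<forall>(x, y)\<in>snd G. (f x, f y) \<in> snd H))"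

text \<open>I(M) for I acting identically on E: the graph part of M.\<close>
definition graph_part :: "'p lstruct \<Rightarrow> graph" where
  "graph_part M = (verts M, edges M)"

text \<open>Turan graph T_{n,l}: vertex i lies in part i mod l (parts of sizes floor/ceil of n/l).\<close>
definition turan :: "nat \<Rightarrow> nat \<Rightarrow> graph" where
  "turan n l = ({0..<n}, {(i, j). i < n \<and> j < n \<and> i mod l \<noteq> j mod l})"

definition chromatic_number :: "graph \<Rightarrow> nat" where
  "chromatic_number G = (LEAST k. \<exists>c :: nat \<Rightarrow> nat.
      (\<forall>v\<in>fst G. c v < k) \<and> (\<forall>(u, v)\<in>snd G. c u \<noteq> c v))"

text \<open>chi(I) for the interpretation I acting identically on E into Forb(F\<up>E);
values in enat, Sup of an unbounded set is \<infinity>. Here n ranges over positive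
integers since structures are nonempty.\<close>
definition chi_I :: "'p set \<Rightarrow> ('p \<Rightarrow> nat) \<Rightarrow> 'p lstruct set \<Rightarrow> enat" where
  "chi_I Lang ar \<F> =
     Sup (enat ` ({l. l \<ge> 1 \<and> (\<forall>n\<ge>1. \<exists>N. forb_model Lang ar (up_E Lang ar \<F>) N \<and>
                    card (verts N) = n \<and> subgraph_emb (turan n l) (graph_part N))} \<union> {0})) + 1"

end

theory Submission
  imports Defs
begin

lemma pullback:
  assumes fm: "forb_model Lang ar (up_E Lang ar \<F>) M"
    and fg: "fin_graph G"
    and inj: "inj_on f (fst G)"
    and img: "f ` fst G \<subseteq> verts M"
    and e: "\<forall>x\<in>fst G. \<forall>y\<in>fst G. (x, y) \<in> snd G \<longrightarrow> (f x, f y) \<in> edges M"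
  shows "\<exists>M'. forb_model Lang ar (up_E Lang ar \<F>) M' \<and> graph_iso (graph_part M') G"
proof -
  define M' :: "'a lstruct" where "M' = \<lparr>verts = fst G, edges = snd G,
     rels = (\<lambda>P. if P \<in> Lang then {xs. set xs \<subseteq> fst G \<and> map f xs \<in> rels M P} else {})\<rparr>"
  have mM: "is_model Lang ar M" using fm by (simp add: forb_model_def)
  have mM': "is_model Lang ar M'"
  proof -
    have "\<forall>P\<in>Lang. rels M' P \<subseteq> {xs. length xs = ar P \<and> distinct xs \<and> set xs \<subseteq> verts M'}"
    proof (intro ballI subsetI)
      fix P xs assume P: "P \<in> Lang" and xs: "xs \<in> rels M' P"
      hence s: "set xs \<subseteq> fst G" and r: "map f xs \<in> rels M P" by (auto simp: M'_def)
      from r P mM have "length (map f xs) = ar P \<and> distinct (map f xs)"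
        unfolding is_model_def by blast
      thus "xs \<in> {xs. length xs = ar P \<and> distinct xs \<and> set xs \<subseteq> verts M'}"
        using s by (auto simp: M'_def distinct_map)
    qed
    thus ?thesis using fg unfolding is_model_def fin_graph_def by (auto simp: M'_def)
  qed
  have nf: "\<not> (\<exists>U. U \<subseteq> verts M' \<and> U \<noteq> {} \<and> (\<exists>G'\<in>up_E Lang ar \<F>. struct_iso Lang (induced M' U) G'))"
  proof
    assume "\<exists>U. U \<subseteq> verts M' \<and> U \<noteq> {} \<and> (\<exists>G'\<in>up_E Lang ar \<F>. struct_iso Lang (induced M' U) G')"
    then obtain U F' where U: "U \<subseteq> fst G" "U \<noteq> {}" and F'u: "F' \<in> up_E Lang ar \<F>"
      and si: "struct_iso Lang (induced M' U) F'" by (auto simp: M'_def)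
    from si obtain g where gb: "bij_betw g U (verts F')"
      and ge: "\<forall>x\<in>U. \<forall>y\<in>U. (x, y) \<in> edges M' \<inter> (U \<times> U) \<longleftrightarrow> (g x, g y) \<in> edges F'"
      and gr: "\<forall>P\<in>Lang. \<forall>xs. set xs \<subseteq> U \<longrightarrow> (xs \<in> {xs \<in> rels M' P. set xs \<subseteq> U} \<longleftrightarrow> map g xs \<in> rels F' P)"
      unfolding struct_iso_def induced_def by auto
    from F'u have mF': "is_model Lang ar F'" and
      exF: "\<exists>F\<in>\<F>. verts F' = verts F \<and> edges F \<subseteq> edges F' \<and> (\<forall>P\<in>Lang. rels F' P = rels F P)"
      by (auto simp: up_E_def)
    define U' where "U' = f ` U"
    define h where "h = inv_into U f"
    have injU: "inj_on f U" using inj U(1) inj_on_subset by blast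
    have fb: "bij_betw f U U'" using injU by (simp add: U'_def bij_betw_imageI)
    have hb: "bij_betw h U' U" unfolding h_def using fb by (rule bij_betw_inv_into)
    define k where "k = g \<circ> h"
    have kb: "bij_betw k U' (verts F')" unfolding k_def using hb gb by (rule bij_betw_trans)
    have hf: "\<And>x. x \<in> U \<Longrightarrow> h (f x) = x" unfolding h_def using injU by simp
    have fh: "\<And>a. a \<in> U' \<Longrightarrow> f (h a) = a" unfolding h_def U'_def by (simp add: f_inv_into_f)
    have hU: "\<And>a. a \<in> U' \<Longrightarrow> h a \<in> U" using hb bij_betwE by blast
    have kinj: "inj_on k U'" using kb bij_betw_def by blast
    have kV: "\<And>a. a \<in> U' \<Longrightarrow> k a \<in> verts F'" using kb bij_betwE by blast
    define F'' where "F'' = F'\<lparr>edges := {(k a, k b) | a b. a \<in> U' \<and> b \<in> U' \<and> (a, b) \<in> edges M}\<rparr>"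
    have U'M: "U' \<subseteq> verts M" using img U(1) by (auto simp: U'_def)
    have edF: "edges F' \<subseteq> edges F''"
    proof
      fix pq assume pq: "pq \<in> edges F'"
      obtain p q where pqe: "pq = (p, q)" by fastforce
      have "p \<in> verts F'" "q \<in> verts F'" using pq pqe mF' unfolding is_model_def by auto
      then obtain x y where xy: "x \<in> U" "y \<in> U" "p = g x" "q = g y"
        using gb by (metis bij_betw_imp_surj_on imageE)
      hence "(x, y) \<in> snd G" using ge pq pqe by (auto simp: M'_def)
      hence "(f x, f y) \<in> edges M" using e xy U(1) by blast
      moreover have "k (f x) = p" "k (f y) = q" using xy hf by (auto simp: k_def)
      moreover have "f x \<in> U'" "f y \<in> U'" using xy by (auto simp: U'_def)
      ultimately show "pq \<in> edges F''" unfolding F''_def pqe by force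
    qed
    have mF'': "is_model Lang ar F''"
    proof -
      have "edges F'' \<subseteq> verts F'' \<times> verts F''" using kV by (auto simp: F''_def)
      moreover have "sym (edges F'')"
      proof -
        have "sym (edges M)" using mM unfolding is_model_def by blast
        thus ?thesis unfolding sym_def F''_def by auto
      qed
      moreover have "irrefl (edges F'')"
      proof -
        { fix a b assume ab: "a \<in> U'" "b \<in> U'" "(a, b) \<in> edges M" "k a = k b"
          hence "a = b" using kinj inj_on_def by metis
          hence False using ab mM unfolding is_model_def irrefl_def by auto }
        thus ?thesis unfolding irrefl_def F''_def by auto
      qed
      ultimately show ?thesis using mF' unfolding is_model_def by (auto simp: F''_def)
    qed
    have F''u: "F'' \<in> up_E Lang ar \<F>"
      proof -
      obtain F where "F \<in> \<F>" "verts F' = verts F" "edges F \<subseteq> edges F'" "\<forall>P\<in>Lang. rels F' P = rels F P"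
        using exF by blast
      hence "verts F'' = verts F \<and> edges F \<subseteq> edges F'' \<and> (\<forall>P\<in>Lang. rels F'' P = rels F P)"
        using edF by (auto simp: F''_def)
      thus ?thesis using mF'' \<open>F \<in> \<F>\<close> unfolding up_E_def by blast
    qed
    have "struct_iso Lang (induced M U') F''"
      unfolding struct_iso_def
    proof (intro exI conjI ballI allI impI)
      show "bij_betw k (verts (induced M U')) (verts F'')" using kb by (simp add: induced_def F''_def)
    next
      fix x y assume "x \<in> verts (induced M U')" "y \<in> verts (induced M U')"
      hence xy: "x \<in> U'" "y \<in> U'" by (auto simp: induced_def)
      show "(x, y) \<in> edges (induced M U') \<longleftrightarrow> (k x, k y) \<in> edges F''"
      proof
        assume "(x, y) \<in> edges (induced M U')"
        thus "(k x, k y) \<in> edges F''" using xy by (auto simp: induced_def F''_def)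
      next
        assume "(k x, k y) \<in> edges F''"
        then obtain a b where ab: "a \<in> U'" "b \<in> U'" "(a, b) \<in> edges M" "k x = k a" "k y = k b"
          by (auto simp: F''_def)
        hence "a = x" "b = y" using kinj xy inj_on_def by metis+
        thus "(x, y) \<in> edges (induced M U')" using ab xy by (auto simp: induced_def)
      qed
    next
      fix P xs assume P: "P \<in> Lang" and sx: "set xs \<subseteq> verts (induced M U')"
      hence sx: "set xs \<subseteq> U'" by (simp add: induced_def)
      define ys where "ys = map h xs"
      have sy: "set ys \<subseteq> U" using sx hU by (auto simp: ys_def)
      have mfy: "map f ys = xs" unfolding ys_def map_map by (rule map_idI) (use sx fh in auto)
      have mgy: "map g ys = map k xs" by (simp add: ys_def k_def)
      have "xs \<in> rels (induced M U') P \<longleftrightarrow> xs \<in> rels M P" using sx by (simp add: induced_def)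
      also have "\<dots> \<longleftrightarrow> ys \<in> {xs \<in> rels M' P. set xs \<subseteq> U}"
        using mfy sy U(1) P by (auto simp: M'_def)
      also have "\<dots> \<longleftrightarrow> map g ys \<in> rels F' P" using gr P sy by blast
      finally show "xs \<in> rels (induced M U') P \<longleftrightarrow> map k xs \<in> rels F'' P"
        using mgy by (simp add: F''_def)
    qed
    moreover have "U' \<noteq> {}" using U(2) by (simp add: U'_def)
    ultimately show False using fm U'M F''u unfolding forb_model_def by blast
  qed
  have "forb_model Lang ar (up_E Lang ar \<F>) M'" using mM' nf unfolding forb_model_def by blast
  moreover have "graph_iso (graph_part M') G"
    unfolding graph_iso_def graph_part_def by (rule exI[of _ id]) (simp add: M'_def)
  ultimately show ?thesis by blast
qed

definition inP :: "'p set \<Rightarrow> ('p \<Rightarrow> nat) \<Rightarrow> 'p lstruct set \<Rightarrow> graph \<Rightarrow> bool" where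
  "inP Lang ar \<F> G \<longleftrightarrow> (\<exists>M. forb_model Lang ar (up_E Lang ar \<F>) M \<and> graph_iso (graph_part M) G)"

lemma emb_trans:
  assumes "subgraph_emb G H" "subgraph_emb H K"
  shows "subgraph_emb G K"
proof -
  obtain f where f: "inj_on f (fst G)" "f ` fst G \<subseteq> fst H" "\<forall>(x, y)\<in>snd G. (f x, f y) \<in> snd H"
    using assms(1) unfolding subgraph_emb_def by blast
  obtain g where g: "inj_on g (fst H)" "g ` fst H \<subseteq> fst K" "\<forall>(x, y)\<in>snd H. (g x, g y) \<in> snd K"
    using assms(2) unfolding subgraph_emb_def by blast
  have "inj_on g (f ` fst G)" using g(1) f(2) by (rule inj_on_subset)
  hence "inj_on (g \<circ> f) (fst G)" using f(1) by (simp add: comp_inj_on)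
  moreover have "(g \<circ> f) ` fst G \<subseteq> fst K" using f(2) g(2) by auto
  moreover have "\<forall>(x, y)\<in>snd G. ((g \<circ> f) x, (g \<circ> f) y) \<in> snd K"
  proof clarify
    fix x y assume "(x, y) \<in> snd G"
    hence "(f x, f y) \<in> snd H" using f(3) by blast
    thus "((g \<circ> f) x, (g \<circ> f) y) \<in> snd K" using g(3) by auto
  qed
  ultimately show ?thesis unfolding subgraph_emb_def by blast
qed


lemma iso_emb:
  assumes "graph_iso G H" and sH: "snd H \<subseteq> fst H \<times> fst H"
  shows "subgraph_emb H G"
proof -
  obtain f where fb: "bij_betw f (fst G) (fst H)"
    and fe: "\<forall>x\<in>fst G. \<forall>y\<in>fst G. (x, y) \<in> snd G \<longleftrightarrow> (f x, f y) \<in> snd H"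
    using assms unfolding graph_iso_def by blast
  define g where "g = inv_into (fst G) f"
  have gb: "bij_betw g (fst H) (fst G)" unfolding g_def using fb by (rule bij_betw_inv_into)
  have fg: "\<And>a. a \<in> fst H \<Longrightarrow> f (g a) = a" unfolding g_def using fb
    by (metis bij_betw_imp_surj_on f_inv_into_f)
  have "\<forall>(x, y)\<in>snd H. (g x, g y) \<in> snd G"
  proof (clarify)
    fix x y assume xy: "(x, y) \<in> snd H"
    hence "x \<in> fst H" "y \<in> fst H" using sH by auto
    hence "g x \<in> fst G" "g y \<in> fst G" using gb bij_betwE by blast+
    moreover have "(f (g x), f (g y)) \<in> snd H" using fg xy \<open>x \<in> fst H\<close> \<open>y \<in> fst H\<close> by simp
    ultimately show "(g x, g y) \<in> snd G" using fe by blast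
  qed
  thus ?thesis using gb unfolding subgraph_emb_def bij_betw_def by blast
qed


lemma pullback':
  assumes "forb_model Lang ar (up_E Lang ar \<F>) M" "fin_graph G" "subgraph_emb G (graph_part M)"
  shows "inP Lang ar \<F> G"
proof -
  obtain f where f: "inj_on f (fst G)" "f ` fst G \<subseteq> verts M" "\<forall>(x, y)\<in>snd G. (f x, f y) \<in> edges M"
    using assms(3) unfolding subgraph_emb_def graph_part_def by auto
  have "\<forall>x\<in>fst G. \<forall>y\<in>fst G. (x, y) \<in> snd G \<longrightarrow> (f x, f y) \<in> edges M" using f(3) by blast
  from pullback[OF assms(1,2) f(1,2) this] show ?thesis unfolding inP_def .
qed

lemma mono_P:
  assumes "inP Lang ar \<F> H" "fin_graph H" "subgraph_emb G H" "fin_graph G"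
  shows "inP Lang ar \<F> G"
proof -
  obtain M where M: "forb_model Lang ar (up_E Lang ar \<F>) M" "graph_iso (graph_part M) H"
    using assms(1) unfolding inP_def by blast
  have "subgraph_emb H (graph_part M)" using iso_emb[OF M(2)] assms(2) unfolding fin_graph_def by blast
  hence "subgraph_emb G (graph_part M)" using assms(3) emb_trans by blast
  thus ?thesis using pullback'[OF M(1) assms(4)] by blast
qed

lemma fin_turan: "n \<ge> 1 \<Longrightarrow> fin_graph (turan n l)"
  unfolding fin_graph_def turan_def sym_def irrefl_def by auto

lemma chrom_turan: "l \<ge> 1 \<Longrightarrow> chromatic_number (turan n l) \<le> l"
  unfolding chromatic_number_def
  by (rule Least_le, rule exI[of _ "\<lambda>i. i mod l"]) (auto simp: turan_def)

lemma colouring: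
  assumes "fin_graph G"
  shows "\<exists>c. (\<forall>v\<in>fst G. c v < chromatic_number G) \<and> (\<forall>(u, v)\<in>snd G. c u \<noteq> c v)"
proof -
  have ex: "\<exists>k c. (\<forall>v\<in>fst G. (c::nat\<Rightarrow>nat) v < k) \<and> (\<forall>(u, v)\<in>snd G. c u \<noteq> c v)"
  proof (intro exI conjI)
    show "\<forall>v\<in>fst G. id v < Suc (Max (fst G))"
      using assms unfolding fin_graph_def by (auto simp: le_imp_less_Suc)
    show "\<forall>(u, v)\<in>snd G. id u \<noteq> id v"
      using assms unfolding fin_graph_def irrefl_def by auto
  qed
  show ?thesis unfolding chromatic_number_def by (rule LeastI_ex[OF ex])
qed

lemma chrom_ge1: "fin_graph G \<Longrightarrow> chromatic_number G \<ge> 1"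
  using colouring[of G] unfolding fin_graph_def by fastforce

lemma embed_turan:
  assumes fg: "fin_graph G" and cl: "chromatic_number G \<le> l"
  shows "subgraph_emb G (turan (Suc (Max (fst G)) * l) l)"
proof -
  obtain c where c: "\<forall>v\<in>fst G. c v < chromatic_number G" "\<forall>(u, v)\<in>snd G. c u \<noteq> c v"
    using colouring[OF fg] by blast
  define m where "m = Suc (Max (fst G))"
  define f where "f v = v * l + c v" for v
  have cl': "\<And>v. v \<in> fst G \<Longrightarrow> c v < l" using c(1) cl by fastforce
  have fd: "\<And>v. v \<in> fst G \<Longrightarrow> f v div l = v" "\<And>v. v \<in> fst G \<Longrightarrow> f v mod l = c v"
  proof -
    fix v assume v: "v \<in> fst G"
    have l: "c v < l" using cl'[OF v] .
    have "f v = c v + v * l" by (simp add: f_def)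
    thus "f v div l = v" using l by simp
  next
    fix v assume v: "v \<in> fst G"
    have l: "c v < l" using cl'[OF v] .
    have "f v = c v + v * l" by (simp add: f_def)
    thus "f v mod l = c v" using l by simp
  qed
  have vm: "\<And>v. v \<in> fst G \<Longrightarrow> v + 1 \<le> m" using fg unfolding fin_graph_def m_def by auto
  have "inj_on f (fst G)" by (rule inj_onI) (metis fd(1))
  moreover have "f ` fst G \<subseteq> {0..<m * l}"
  proof clarify
    fix v assume v: "v \<in> fst G"
    have "f v < v * l + l" using cl'[OF v] by (simp add: f_def)
    also have "\<dots> = (v + 1) * l" by simp
    also have "\<dots> \<le> m * l" using vm[OF v] by (rule mult_le_mono1)
    finally show "f v \<in> {0..<m * l}" by simp
  qed
  moreover have "\<forall>(x, y)\<in>snd G. (f x, f y) \<in> snd (turan (m * l) l)"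
  proof clarify
    fix x y assume xy: "(x, y) \<in> snd G"
    hence "x \<in> fst G" "y \<in> fst G" using fg unfolding fin_graph_def by auto
    moreover have "c x \<noteq> c y" using c(2) xy by blast
    ultimately show "(f x, f y) \<in> snd (turan (m * l) l)"
      using \<open>f ` fst G \<subseteq> {0..<m * l}\<close> fd(2) by (auto simp: turan_def)
  qed
  ultimately show ?thesis unfolding subgraph_emb_def m_def turan_def by auto
qed

lemma cond_iff:
  assumes "n \<ge> 1"
  shows "(\<exists>N. forb_model Lang ar (up_E Lang ar \<F>) N \<and> card (verts N) = n \<and>
            subgraph_emb (turan n l) (graph_part N)) \<longleftrightarrow> inP Lang ar \<F> (turan n l)"
proof
  assume "\<exists>N. forb_model Lang ar (up_E Lang ar \<F>) N \<and> card (verts N) = n \<and>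
            subgraph_emb (turan n l) (graph_part N)"
  thus "inP Lang ar \<F> (turan n l)" using pullback' fin_turan[OF assms] by blast
next
  assume "inP Lang ar \<F> (turan n l)"
  then obtain M where M: "forb_model Lang ar (up_E Lang ar \<F>) M" "graph_iso (graph_part M) (turan n l)"
    unfolding inP_def by blast
  have "card (verts M) = n" using M(2) unfolding graph_iso_def graph_part_def turan_def
    by (auto dest: bij_betw_same_card)
  moreover have "subgraph_emb (turan n l) (graph_part M)"
    using iso_emb[OF M(2)] fin_turan[OF assms] unfolding fin_graph_def by blast
  ultimately show "\<exists>N. forb_model Lang ar (up_E Lang ar \<F>) N \<and> card (verts N) = n \<and>
            subgraph_emb (turan n l) (graph_part N)" using M(1) by blast
qed


theorem theorem3p5:
  fixes Lang :: "'p set" and ar :: "'p \<Rightarrow> nat" and \<F> :: "'p lstruct set"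
  assumes "finite Lang"
    and "\<forall>F\<in>\<F>. is_model Lang ar F"
  shows "chi_I Lang ar \<F> =
    Inf (enat ` {chromatic_number G | G. fin_graph G \<and>
         (\<forall>M. forb_model Lang ar (up_E Lang ar \<F>) M \<longrightarrow> \<not> graph_iso (graph_part M) G)})"
proof -
  define S where "S = {l. l \<ge> 1 \<and> (\<forall>n\<ge>1. \<exists>N. forb_model Lang ar (up_E Lang ar \<F>) N \<and>
                    card (verts N) = n \<and> subgraph_emb (turan n l) (graph_part N))}"
  define R where "R = {chromatic_number G | G. fin_graph G \<and>
         (\<forall>M. forb_model Lang ar (up_E Lang ar \<F>) M \<longrightarrow> \<not> graph_iso (graph_part M) G)}"
  have S: "S = {l. l \<ge> 1 \<and> (\<forall>n\<ge>1. inP Lang ar \<F> (turan n l))}"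
    unfolding S_def using cond_iff by blast
  have R: "R = {chromatic_number G | G. fin_graph G \<and> \<not> inP Lang ar \<F> G}"
    unfolding R_def inP_def by blast
  have K1: "inP Lang ar \<F> G" if "l \<in> S" "fin_graph G" "chromatic_number G \<le> l" for l G
  proof -
    define n where "n = Suc (Max (fst G)) * l"
    have "l \<ge> 1" using that(1) S by auto
    hence "n \<ge> 1" by (simp add: n_def)
    hence "inP Lang ar \<F> (turan n l)" using that(1) S by auto
    thus ?thesis using mono_P fin_turan[OF \<open>n \<ge> 1\<close>] embed_turan[OF that(2,3)] that(2)
      unfolding n_def by blast
  qed
  have K4: "s < r" if rR: "r \<in> R" and sS: "s \<in> S" for r s
  proof (rule ccontr)
    assume "\<not> s < r"
    obtain G where "r = chromatic_number G" "fin_graph G" "\<not> inP Lang ar \<F> G" using rR R by blast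
    thus False using K1[OF sS] \<open>\<not> s < r\<close> by fastforce
  qed
  have R1: "r \<ge> 1" if "r \<in> R" for r using that R chrom_ge1 by blast
  have notS: "\<exists>r\<in>R. r \<le> l" if l1: "l \<ge> 1" and lS: "l \<notin> S" for l
  proof -
    obtain n where n: "n \<ge> 1" "\<not> inP Lang ar \<F> (turan n l)" using l1 lS S by auto
    hence "chromatic_number (turan n l) \<in> R" using R fin_turan by blast
    thus ?thesis using chrom_turan[OF l1] by blast
  qed
  have lhs: "chi_I Lang ar \<F> = Sup (enat ` (S \<union> {0})) + 1" unfolding chi_I_def S_def by simp
  show ?thesis unfolding R_def[symmetric] lhs
  proof (cases "finite S")
    case True
    define m where "m = Max (S \<union> {0})"
    have fin: "finite (S \<union> {0})" using True by simp
    have sup: "Sup (enat ` (S \<union> {0})) = enat m"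
    proof (rule antisym)
      show "Sup (enat ` (S \<union> {0})) \<le> enat m"
        by (rule Sup_least) (use fin in \<open>auto simp: m_def\<close>)
      have "m \<in> S \<union> {0}" unfolding m_def using fin by (rule Max_in) simp
      thus "enat m \<le> Sup (enat ` (S \<union> {0}))" by (intro Sup_upper) blast
    qed
    have "m + 1 \<notin> S" using fin m_def by (metis Max_ge UnI1 add_le_same_cancel1 not_one_le_zero)
    then obtain r where r: "r \<in> R" "r \<le> m + 1" using notS by auto
    have ge: "m + 1 \<le> r'" if "r' \<in> R" for r'
    proof (cases "m = 0")
      case True thus ?thesis using R1[OF that] by simp
    next
      case False
      hence "m \<in> S" using fin m_def Max_in[OF fin] by auto
      thus ?thesis using K4[OF that] by fastforce
    qed
    have "Inf (enat ` R) = enat (m + 1)"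
    proof (rule antisym)
      have "Inf (enat ` R) \<le> enat r" using r(1) by (simp add: Inf_lower)
      thus "Inf (enat ` R) \<le> enat (m + 1)" using r(2) order_trans by fastforce
      show "enat (m + 1) \<le> Inf (enat ` R)" by (rule Inf_greatest) (auto dest: ge)
    qed
    thus "Sup (enat ` (S \<union> {0})) + 1 = Inf (enat ` R)" using sup by (simp add: one_enat_def)
  next
    case False
    have "infinite (enat ` (S \<union> {0}))" using False by (simp add: finite_image_iff inj_on_def)
    hence sup: "Sup (enat ` (S \<union> {0})) = \<infinity>" unfolding Sup_enat_def by auto
    have "R = {}"
    proof (rule ccontr)
      assume "R \<noteq> {}"
      then obtain r where "r \<in> R" by blast
      obtain s where "s \<in> S" "r \<le> s" using False by (meson infinite_nat_iff_unbounded_le)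
      thus False using K4[OF \<open>r \<in> R\<close>] by fastforce
    qed
    thus "Sup (enat ` (S \<union> {0})) + 1 = Inf (enat ` R)" using sup by (simp add: top_enat_def)
  qed
qed

end
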